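(* Let $(u_k)_{k\in\mathbb{N}}$ be the positive roots of the equation $u=\tan(u)$. Then for every $s\in(0,1)$ there exists $k_0\in\mathbb{N}$ such that $u_{k_0}$ is not a root of the equation $u/s=\tan(u/s)$. *)

theory Defs
  imports Complex_Main
begin

end

theory Submission
  imports Defs "HOL-Analysis.Analysis"
begin

lemma root_odd:
  fixes x :: real
  assumes "x > 0" "tan x = x"
  shows "\<exists>i::int. odd i \<and> x + arctan (1/x) = of_int i * (pi/2)"
proof -
  have cx: "cos x \<noteq> 0"
  proof
    assume "cos x = 0"
    then have "tan x = 0" by (simp add: tan_def)
    with assms show False by simp
  qed
  have sx: "sin x = x * cos x" using assms(2) cx by (simp add: tan_def field_simps)
  define t where "t = arctan (1/x)"
  have st: "sin t = (1/x) * cos t" unfolding t_def by (simp add: sin_arctan cos_arctan)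
  have "cos (x + t) = cos x * cos t - sin x * sin t" by (simp add: cos_add)
  also have "\<dots> = 0" using st sx assms(1) by simp
  finally show ?thesis unfolding t_def cos_zero_iff_int by blast
qed

lemma cos_nz:
  fixes y :: real and m :: nat
  assumes "real m * pi \<le> y" "y < real m * pi + pi/2"
  shows "cos y \<noteq> 0"
proof
  assume "cos y = 0"
  then obtain i where i: "odd i" "y = of_int i * (pi/2)" unfolding cos_zero_iff_int by blast
  have "real m * pi \<le> of_int i * (pi/2)" using assms i by simp
  then have "2 * real m \<le> of_int i" using pi_gt_zero by (simp add: field_simps)
  moreover have "of_int i * (pi/2) < real m * pi + pi/2" using assms i by simp
  then have "pi * of_int i < pi * (2 * real m + 1)" by (simp add: algebra_simps)
  then have "of_int i < 2 * real m + 1" using pi_gt_zero mult_less_cancel_left_pos by blast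
  ultimately have "i = 2 * int m" by linarith
  with i show False by simp
qed

lemma root_exists:
  fixes m :: nat
  assumes "m \<ge> 1"
  shows "\<exists>x. real m * pi < x \<and> x < real m * pi + pi/2 \<and> tan x = x"
proof -
  define c where "c = real m * pi + 2"
  have c0: "c > 0" unfolding c_def using pi_gt_zero by (simp add: add_nonneg_pos)
  define e where "e = arctan (1/c)"
  have e0: "0 < e" "e < pi/2" using c0 arctan_ubound unfolding e_def by auto
  define b where "b = real m * pi + pi/2 - e"
  have tb: "tan b = c"
  proof -
    have "tan b = tan (pi/2 - e + real m * pi)" unfolding b_def by (simp add: algebra_simps)
    also have "\<dots> = inverse (tan e)" by (simp only: tan_periodic_nat tan_cot)
    also have "\<dots> = c" unfolding e_def tan_arctan using c0 by simp
    finally show ?thesis .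
  qed
  have ab: "real m * pi \<le> b" using e0 unfolding b_def by simp
  have cont: "continuous_on {real m * pi .. b} (\<lambda>x. tan x - x)"
  proof (intro continuous_at_imp_continuous_on ballI)
    fix y assume "y \<in> {real m * pi .. b}"
    then have "cos y \<noteq> 0" using cos_nz[of m y] e0 unfolding b_def by auto
    then show "isCont (\<lambda>x. tan x - x) y" by (intro continuous_intros) auto
  qed
  have f1: "tan (real m * pi) - real m * pi \<le> 0"
    using tan_periodic_nat[of 0 m] by simp
  have f2: "0 \<le> tan b - b" using tb e0 pi_less_4 unfolding b_def c_def by simp
  obtain x where x: "real m * pi \<le> x" "x \<le> b" "tan x - x = 0"
    using IVT'[of "\<lambda>x. tan x - x" "real m * pi" 0 b, OF f1 f2 ab cont] by auto
  have "x \<noteq> real m * pi"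
  proof
    assume "x = real m * pi"
    then have "tan x = 0" using tan_periodic_nat[of 0 m] by simp
    with x(3) \<open>x = real m * pi\<close> assms show False by simp
  qed
  then show ?thesis using x e0 unfolding b_def by (intro exI[of _ x]) auto
qed

theorem lemmaA1:
  fixes u :: "nat \<Rightarrow> real" and s :: real
  assumes roots: "range u = {x. x > 0 \<and> x = tan x}"
    and s: "0 < s" "s < 1"
  shows "\<exists>k0. \<not> (u k0 / s = tan (u k0 / s))"
proof (rule ccontr)
  assume "\<not> ?thesis"
  then have H: "\<And>k. u k / s = tan (u k / s)" by blast
  have cl: "tan (x/s) = x/s" if "x > 0" "tan x = x" for x
  proof -
    have "x \<in> range u" using roots that by auto
    then obtain k where "x = u k" by auto
    then show ?thesis using H[of k] by simp
  qed
  define L where "L = 1/s"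
  have L1: "L > 1" using s unfolding L_def by simp
  have key: "\<exists>j::int. 0 < L*(2*real m+1) - of_int j \<and> L*(2*real m+1) - of_int j < L/real m"
    if m1: "m \<ge> 1" for m :: nat
  proof -
    obtain x where x: "real m * pi < x" "x < real m * pi + pi/2" "tan x = x"
      using root_exists[OF m1] by blast
    have xp: "x > 0" using x(1) m1 by (smt (verit) of_nat_0_le_iff pi_gt_zero mult_nonneg_nonneg)
    define a where "a = arctan (1/x)"
    obtain i where i: "odd i" "x + a = of_int i * (pi/2)" using root_odd[OF xp x(3)] a_def by blast
    have a0: "0 < a" "a < pi/2" using xp arctan_ubound unfolding a_def by auto
    have "real m * pi < of_int i * (pi/2)" using i x a0 by linarith
    then have l: "2 * real m < of_int i" using pi_gt_zero by (simp add: field_simps)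
    have "of_int i * (pi/2) < real m * pi + pi" using i x a0 by linarith
    then have "pi * of_int i < pi * (2 * real m + 2)" by (simp add: algebra_simps)
    then have r: "of_int i < 2 * real m + 2" using pi_gt_zero mult_less_cancel_left_pos by blast
    have "i = 2 * int m + 1" using l r i(1)
    proof -
      have "i = 2 * int m + 1 \<or> i = 2 * int m + 2 \<or> i \<le> 2 * int m \<or> i \<ge> 2*int m + 2" by linarith
      moreover have "\<not> i \<le> 2 * int m" using l by linarith
      moreover have "\<not> i \<ge> 2 * int m + 2" using r by linarith
      moreover have "i \<noteq> 2 * int m + 2" using i(1) by auto
      ultimately show ?thesis by blast
    qed
    then have ia: "x + a = (2 * real m + 1) * (pi/2)" using i by simp
    have xsp: "x/s > 0" using xp s by simp
    define b where "b = arctan (1/(x/s))"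
    obtain j where j: "odd j" "x/s + b = of_int j * (pi/2)"
      using root_odd[OF xsp cl[OF xp x(3)]] b_def by blast
    have eq: "(L*(2*real m+1) - of_int j) * (pi/2) = a/s - b"
    proof -
      have "(L*(2*real m+1)) * (pi/2) = (x + a)/s" unfolding L_def ia by simp
      then show ?thesis using j(2) by (simp add: algebra_simps add_divide_distrib)
    qed
    have b0: "0 < b" using xp s unfolding b_def by simp
    have ba: "b < a" unfolding a_def b_def using xp s by (simp add: arctan_less_iff divide_strict_right_mono)
    have aas: "a < a/s" using a0 s by (simp add: less_divide_eq)
    have ax: "a \<le> 1/x" unfolding a_def using xp by (intro arctan_le_self) simp
    have "a/s - b < a/s" using b0 by simp
    also have "\<dots> \<le> (1/x)/s" using divide_right_mono[OF ax, of s] s by simp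
    also have "\<dots> \<le> L/real m * (pi/2)"
    proof -
      have mp: "real m > 0" using m1 by simp
      have mpi: "0 < real m * pi" using mp pi_gt_zero by simp
      have "1/x \<le> 1/(real m * pi)" using x(1) mpi xp
        by (intro divide_left_mono) (auto intro: mult_pos_pos)
      also have "\<dots> \<le> pi/(2*real m)"
      proof -
        have "2 \<le> pi*pi" using pi_gt3 mult_mono[of 3 pi 3 pi] by simp
        then show ?thesis using mp pi_gt_zero by (simp add: field_simps)
      qed
      finally have "1/x \<le> pi/(2*real m)" .
      then have "(1/x)/s \<le> (pi/(2*real m))/s" using divide_right_mono[of "1/x" "pi/(2*real m)" s] s by linarith
      then show ?thesis unfolding L_def by (simp add: mult_ac)
    qed
    finally have "a/s - b < L/real m * (pi/2)" .
    then have up: "(L*(2*real m+1) - of_int j) * (pi/2) < L/real m * (pi/2)" unfolding eq .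
    have lo: "0 < (L*(2*real m+1) - of_int j) * (pi/2)" unfolding eq using ba aas by linarith
    show ?thesis
    proof (intro exI[of _ j] conjI)
      have p2: "pi/2 > 0" using pi_gt_zero by simp
      show "0 < L*(2*real m+1) - of_int j" using lo p2 by (simp add: zero_less_mult_iff)
      show "L*(2*real m+1) - of_int j < L/real m"
        using up p2 mult_less_cancel_right_pos by blast
    qed
  qed
  obtain J where J: "\<And>m. m \<ge> 1 \<Longrightarrow> 0 < L*(2*real m+1) - of_int (J m) \<and> L*(2*real m+1) - of_int (J m) < L/real m"
    using key by metis
  have near: "\<bar>2*L - of_int (J (m+1) - J m)\<bar> < L / real m" if "m \<ge> 1" for m
  proof -
    have "L/real (m+1) \<le> L/real m" using that L1 by (intro divide_left_mono) auto
    moreover have "L*(2*real (m+1)+1) = L*(2*real m+1) + 2*L" by (simp add: algebra_simps)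
    ultimately show ?thesis using J[OF that] J[of "m+1"] that
      unfolding abs_less_iff of_int_diff by linarith
  qed
  define K where "K = \<lfloor>2*L\<rfloor>"
  have K: "2*L = of_int K"
  proof (rule ccontr)
    assume ne: "2*L \<noteq> of_int K"
    define c where "c = min (2*L - of_int K) (of_int K + 1 - 2*L)"
    have c0: "c > 0" using ne unfolding c_def K_def
      using of_int_floor_le[of "2*L"] real_of_int_floor_add_one_gt[of "2*L"] by linarith
    obtain m :: nat where m: "real m > L / c" using reals_Archimedean2 by blast
    have m1: "m \<ge> 1"
    proof (rule ccontr)
      assume "\<not> m \<ge> 1" then have "m = 0" by simp
      with m L1 c0 show False by (simp add: divide_pos_pos) (smt (verit) divide_pos_pos)
    qed
    have "L / real m < c" using m c0 m1 by (simp add: field_simps)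
    moreover have cd: "c \<le> \<bar>2*L - of_int d\<bar>" for d :: int
    proof (cases "d \<le> K")
      case True then show ?thesis unfolding c_def by (smt (verit) of_int_le_iff)
    next
      case False then have "d \<ge> K+1" by simp
      then show ?thesis unfolding c_def by (smt (verit) of_int_le_iff of_int_add of_int_1)
    qed
    ultimately show False using near[OF m1] cd[of "J (m + 1) - J m"] by linarith
  qed
  obtain m :: nat where m: "real m > 2*L" using reals_Archimedean2 by blast
  have m1: "m \<ge> 1" using m L1 by (cases m) auto
  have e1: "0 < L*(2*real m+1) - of_int (J m)" and e2: "L*(2*real m+1) - of_int (J m) < L/real m"
    using J[OF m1] by auto
  have "L/real m < 1/2" using m m1 L1 by (simp add: field_simps)
  define z where "z = K*(2*int m+1) - 2 * J m"
  have zz: "of_int z = 2*(L*(2*real m+1) - of_int (J m))" unfolding z_def using K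
    by (simp add: algebra_simps)
  define w where "w = L*(2*real m+1) - of_int (J m)"
  have "0 < (of_int z::real)" using zz e1 unfolding w_def[symmetric] by linarith
  moreover have "(of_int z::real) < 1" using zz e2 \<open>L/real m < 1/2\<close> unfolding w_def[symmetric] by linarith
  ultimately
  show False by simp
qed

end
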